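(* Let $k$ be a field, $X$ a finite non-empty set, and for every $a\in X$ let $\sigma_a,\tau_a:X\to X$ be maps with each $\sigma_a$ bijective; let ${\cal A}$ be the special set-theoretic Yang–Baxter algebra of these data. Suppose $(X,+,\circ)$ is a brace and, for all $a,b\in X$, $\sigma_a(b)=-a+a\circ b$, $\sigma_{\sigma_a(b)}(\tau_b(a))=a$ and $w_aw_b=w_{a\circ b}$. Let ${\cal F}=\sum_{a\in X}h_a\otimes w_a^{-1}$ and, for an integer $n\ge2$, \[{\cal F}_{12\ldots n-1,n}:=\sum_{a_1,\ldots,a_{n-1}\in X}h_{a_1}\otimes h_{\sigma_{a_1}(a_2)}\otimes h_{\sigma_{a_1}(\sigma_{a_2}(a_3))}\otimes\cdots\otimes h_{\sigma_{a_1}(\sigma_{a_2}(\cdots\sigma_{a_{n-2}}(a_{n-1})\cdots))}\otimes w_{a_{n-1}}^{-1}w_{a_{n-2}}^{-1}\cdots w_{a_1}^{-1}\in{\cal A}^{\otimes n},\] and define recursively ${\cal F}_{12}:={\cal F}$ and ${\cal F}_{12\ldots n}:=({\cal F}_{12\ldots n-1}\otimes1_{\cal A})\,{\cal F}_{12\ldots n-1,n}$ for $n\ge3$. Then: \begin{enumerate} \item ${\cal F}_{12\ldots n-1,n}=(\Delta^{(n-1)}\otimes\mathrm{id}){\cal F}$; \item ${\cal F}_{12\ldots n}=\sum_{a_1,\ldots,a_{n-1}\in X}h_{a_1}\otimes h_{a_2}w_{a_1}^{-1}\otimes h_{a_3}w_{a_1\circ a_2}^{-1}\otimes\cdots\otimes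 h_{a_{n-1}}w^{-1}_{a_1\circ a_2\circ\cdots\circ a_{n-2}}\otimes w^{-1}_{a_1\circ a_2\circ\cdots\circ a_{n-1}}.$ \end{enumerate}
   Context: The special set-theoretic Yang–Baxter algebra ${\cal A}$ is the unital associative $k$-algebra generated by $1_{\cal A},h_a,w_a,w_a^{-1}$ ($a\in X$) subject to, for all $a,b\in X$: $h_ah_b=\delta_{a,b}h_a$, $w_a^{-1}w_a=w_aw_a^{-1}=1_{\cal A}$, $w_aw_b=w_{\sigma_a(b)}w_{\tau_b(a)}$, $w_ah_b=h_{\sigma_a(b)}w_a$, and $\sum_{a\in X}h_a=1_{\cal A}$. A brace is a set with two group operations $+$ (abelian) and $\circ$ such that $a\circ(b+c)=a\circ b-a+a\circ c$. $\Delta:{\cal A}\to{\cal A}\otimes{\cal A}$ is the algebra homomorphism with $\Delta(w_a^{\pm1})=w_a^{\pm1}\otimes w_a^{\pm1}$ and $\Delta(h_a)=\sum_{b,c\in X,\,b+c=a}h_b\otimes h_c$; $\Delta^{(m)}:{\cal A}\to{\cal A}^{\otimes m}$ denotes the iterated (coassociative) coproduct, with $\Delta^{(1)}=\mathrm{id}$ and $\Delta^{(2)}=\Delta$. *)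

theory Defs
  imports Main "HOL-Library.FuncSet"
begin

definition is_brace :: "('x::ab_group_add \<Rightarrow> 'x \<Rightarrow> 'x) \<Rightarrow> bool" where
  "is_brace cm \<longleftrightarrow>
     (\<exists>e. (\<forall>a b c. cm (cm a b) c = cm a (cm b c)) \<and> (\<forall>a. cm e a = a \<and> cm a e = a)
          \<and> (\<forall>a. \<exists>b. cm a b = e \<and> cm b a = e))
   \<and> (\<forall>a b c. cm a (b + c) = cm a b - a + cm a c)"

definition is_k_algebra :: "('k::field \<Rightarrow> 'b::ring_1) \<Rightarrow> bool" where
  "is_k_algebra \<iota> \<longleftrightarrow> \<iota> 0 = 0 \<and> \<iota> 1 = 1 \<and> (\<forall>x y. \<iota> (x + y) = \<iota> x + \<iota> y)
     \<and> (\<forall>x y. \<iota> (x * y) = \<iota> x * \<iota> y) \<and> (\<forall>x b. \<iota> x * b = b * \<iota> x)"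

definition YB_relations ::
  "('x \<Rightarrow> 'x \<Rightarrow> 'x) \<Rightarrow> ('x \<Rightarrow> 'x \<Rightarrow> 'x) \<Rightarrow>
   ('x::finite \<Rightarrow> 'b::ring_1) \<Rightarrow> ('x \<Rightarrow> 'b) \<Rightarrow> ('x \<Rightarrow> 'b) \<Rightarrow> bool" where
  "YB_relations \<sigma> \<tau> h w wi \<longleftrightarrow>
     (\<forall>a b. h a * h b = (if a = b then h a else 0))
   \<and> (\<forall>a. wi a * w a = 1 \<and> w a * wi a = 1)
   \<and> (\<forall>a b. w a * w b = w (\<sigma> a b) * w (\<tau> b a))
   \<and> (\<forall>a b. w a * h b = h (\<sigma> a b) * w a)
   \<and> (\<Sum>a\<in>UNIV. h a) = 1"

text \<open>A model of the tensor power A^{\<otimes>n} inside a ring B: for every slot i < n,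
  elements h i a, w i a, wi i a (the images of 1\<otimes>..\<otimes>h_a\<otimes>..\<otimes>1 etc.) satisfying the
  relations of A, with generators in different slots commuting.\<close>
definition tensor_model ::
  "nat \<Rightarrow> ('x \<Rightarrow> 'x \<Rightarrow> 'x) \<Rightarrow> ('x \<Rightarrow> 'x \<Rightarrow> 'x) \<Rightarrow>
   (nat \<Rightarrow> 'x::finite \<Rightarrow> 'b::ring_1) \<Rightarrow> (nat \<Rightarrow> 'x \<Rightarrow> 'b) \<Rightarrow> (nat \<Rightarrow> 'x \<Rightarrow> 'b) \<Rightarrow> bool" where
  "tensor_model n \<sigma> \<tau> h w wi \<longleftrightarrow>
     (\<forall>i<n. YB_relations \<sigma> \<tau> (h i) (w i) (wi i))
   \<and> (\<forall>i<n. \<forall>j<n. i \<noteq> j \<longrightarrow>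
        (\<forall>x\<in>range (h i) \<union> range (w i) \<union> range (wi i).
         \<forall>y\<in>range (h j) \<union> range (w j) \<union> range (wi j). x * y = y * x))"

definition sigma_chain :: "('x \<Rightarrow> 'x \<Rightarrow> 'x) \<Rightarrow> (nat \<Rightarrow> 'x) \<Rightarrow> nat \<Rightarrow> 'x" where
  "sigma_chain \<sigma> a j = foldr (\<lambda>i x. \<sigma> (a i) x) [0..<j] (a j)"

definition circ_chain :: "('x \<Rightarrow> 'x \<Rightarrow> 'x) \<Rightarrow> (nat \<Rightarrow> 'x) \<Rightarrow> nat \<Rightarrow> 'x" where
  "circ_chain cm a k = foldl (\<lambda>x i. cm x (a i)) (a 0) [1..<k]"

text \<open>F_{12...m-1,m} in A^{\<otimes>m} (slots 0..m-1), with a_1..a_{m-1} written a 0 .. a (m-2):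
  sum over a of  h_{c_1} \<otimes> ... \<otimes> h_{c_{m-1}} \<otimes> w^{-1}_{a_{m-1}} ... w^{-1}_{a_1}.\<close>
definition F_col ::
  "('x \<Rightarrow> 'x \<Rightarrow> 'x) \<Rightarrow> (nat \<Rightarrow> 'x::finite \<Rightarrow> 'b::ring_1) \<Rightarrow> (nat \<Rightarrow> 'x \<Rightarrow> 'b) \<Rightarrow> nat \<Rightarrow> 'b" where
  "F_col \<sigma> h wi m =
     (\<Sum>a\<in>Pi\<^sub>E {..<m-1} (\<lambda>_. UNIV).
        prod_list (map (\<lambda>i. if i < m - 1 then h i (sigma_chain \<sigma> a i)
                             else prod_list (map (\<lambda>j. wi (m-1) (a j)) (rev [0..<m-1])))
                   [0..<m]))"

primrec F_tot ::
  "('x \<Rightarrow> 'x \<Rightarrow> 'x) \<Rightarrow> (nat \<Rightarrow> 'x::finite \<Rightarrow> 'b::ring_1) \<Rightarrow> (nat \<Rightarrow> 'x \<Rightarrow> 'b) \<Rightarrow> nat \<Rightarrow> 'b" where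
  "F_tot \<sigma> h wi 0 = 1"
| "F_tot \<sigma> h wi (Suc m) =
     (if m < 2 then F_col \<sigma> h wi 2 else F_tot \<sigma> h wi m * F_col \<sigma> h wi (Suc m))"

text \<open>Delta^{(m)}(h_a) placed in slots 0..m-1, via Delta^{(1)} = id and
  Delta^{(m+1)} = (Delta^{(m)} \<otimes> id) \<circ> Delta, Delta(h_a) = sum_{b+c=a} h_b \<otimes> h_c.\<close>
primrec Delta_h ::
  "(nat \<Rightarrow> 'x::{finite,ab_group_add} \<Rightarrow> 'b::ring_1) \<Rightarrow> nat \<Rightarrow> 'x \<Rightarrow> 'b" where
  "Delta_h h 0 a = h 0 a"
| "Delta_h h (Suc m) a =
     (if m = 0 then h 0 a
      else (\<Sum>p\<in>{(b, c). b + c = a}. Delta_h h m (fst p) * h m (snd p)))"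

definition F_tot_formula ::
  "('x \<Rightarrow> 'x \<Rightarrow> 'x) \<Rightarrow> (nat \<Rightarrow> 'x::finite \<Rightarrow> 'b::ring_1) \<Rightarrow> (nat \<Rightarrow> 'x \<Rightarrow> 'b) \<Rightarrow> nat \<Rightarrow> 'b" where
  "F_tot_formula cm h wi n =
     (\<Sum>a\<in>Pi\<^sub>E {..<n-1} (\<lambda>_. UNIV).
        prod_list (map (\<lambda>i. if i = 0 then h 0 (a 0)
                             else if i < n - 1 then h i (a i) * wi i (circ_chain cm a i)
                             else wi i (circ_chain cm a (n-1)))
                   [0..<n]))"

end

theory Submission
  imports Defs
begin

lemma sum_PiE_Suc:
  fixes f :: "(nat \<Rightarrow> 'x::finite) \<Rightarrow> 'b::comm_monoid_add"
  shows "sum f (Pi\<^sub>E {..<Suc m} (\<lambda>_. UNIV)) =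
    (\<Sum>c\<in>Pi\<^sub>E {..<m} (\<lambda>_. UNIV). \<Sum>y\<in>UNIV. f (c(m := y)))"
proof -
  have e: "{..<Suc m} = insert m {..<m}" by auto
  have "sum f (Pi\<^sub>E {..<Suc m} (\<lambda>_. UNIV)) =
     sum f ((\<lambda>(y, g). g(m := y)) ` (UNIV \<times> Pi\<^sub>E {..<m} (\<lambda>_. UNIV)))"
    unfolding e PiE_insert_eq by simp
  also have "\<dots> = sum (f \<circ> (\<lambda>(y, g). g(m := y))) (UNIV \<times> Pi\<^sub>E {..<m} (\<lambda>_. UNIV))"
    by (rule sum.reindex) (rule inj_combinator[where T="\<lambda>_. UNIV", simplified], simp)
  also have "\<dots> = (\<Sum>y\<in>UNIV. \<Sum>c\<in>Pi\<^sub>E {..<m} (\<lambda>_. UNIV). f (c(m := y)))"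
    by (simp add: sum.cartesian_product split_def)
  also have "\<dots> = (\<Sum>c\<in>Pi\<^sub>E {..<m} (\<lambda>_. UNIV). \<Sum>y\<in>UNIV. f (c(m := y)))"
    by (rule sum.swap)
  finally show ?thesis .
qed

lemma prod_list_upd:
  "prod_list (map (\<lambda>i. g i ((c(m := y)) i)) [0..<m]) = prod_list (map (\<lambda>i. g i (c i)) [0..<m])"
  by (rule arg_cong[where f=prod_list], rule map_cong) auto

lemma prod_list_upd_Suc:
  "prod_list (map (\<lambda>i. g i ((c(m := y)) i)) [0..<Suc m]) = prod_list (map (\<lambda>i. g i (c i)) [0..<m]) * g m y"
  using prod_list_upd[of g c m y] by simp

lemma Delta_h_eq:
  fixes h :: "nat \<Rightarrow> 'x::{finite,ab_group_add} \<Rightarrow> 'b::ring_1"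
  assumes "1 \<le> m"
  shows "Delta_h h m x = (\<Sum>c\<in>Pi\<^sub>E {..<m} (\<lambda>_. UNIV).
            if (\<Sum>i<m. c i) = x then prod_list (map (\<lambda>i. h i (c i)) [0..<m]) else 0)"
  using assms
proof (induction m arbitrary: x)
  case 0 then show ?case by simp
next
  case (Suc m)
  show ?case
  proof (cases "m = 0")
    case True
    then show ?thesis
      by (simp add: sum_PiE_Suc[where m=0] PiE_empty_domain)
  next
    case False
    then have m1: "1 \<le> m" by simp
    have "Delta_h h (Suc m) x = (\<Sum>p\<in>{(b, c). b + c = x}. Delta_h h m (fst p) * h m (snd p))"
      using False by simp
    also have "{(b, c). b + c = x} = (\<lambda>y. (x - y, y)) ` UNIV"
      by (auto simp: image_iff algebra_simps)
    also have "(\<Sum>p\<in>(\<lambda>y. (x - y, y)) ` UNIV. Delta_h h m (fst p) * h m (snd p))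
        = (\<Sum>y\<in>UNIV. Delta_h h m (x - y) * h m y)"
      by (subst sum.reindex) (auto simp: inj_on_def)
    also have "\<dots> = (\<Sum>y\<in>UNIV. \<Sum>c\<in>Pi\<^sub>E {..<m} (\<lambda>_. UNIV).
            if (\<Sum>i<m. c i) = x - y then prod_list (map (\<lambda>i. h i (c i)) [0..<m]) * h m y else 0)"
      by (simp add: Suc.IH[OF m1] sum_distrib_right)  (rule sum.cong, simp, rule sum.cong, auto)
    also have "\<dots> = (\<Sum>c\<in>Pi\<^sub>E {..<m} (\<lambda>_. UNIV). \<Sum>y\<in>UNIV.
            if (\<Sum>i<m. c i) = x - y then prod_list (map (\<lambda>i. h i (c i)) [0..<m]) * h m y else 0)"
      by (rule sum.swap)
    also have "\<dots> = (\<Sum>c\<in>Pi\<^sub>E {..<Suc m} (\<lambda>_. UNIV).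
            if (\<Sum>i<Suc m. c i) = x then prod_list (map (\<lambda>i. h i (c i)) [0..<Suc m]) else 0)"
    proof -
      have S: "\<And>c y. (\<Sum>i<Suc m. (c(m := y)) i) = (\<Sum>i<m. c i) + y"
        by (simp add: sum.lessThan_Suc)
      have C: "\<And>c y. ((\<Sum>i<m. c i) + y = x) = ((\<Sum>i<m. c i) = x - y)"
        by (auto simp: algebra_simps)
      have P: "\<And>c y. prod_list (map (\<lambda>i. h i ((c(m := y)) i)) [0..<Suc m]) = prod_list (map (\<lambda>i. h i (c i)) [0..<m]) * h m y"
        by (rule prod_list_upd_Suc)
      show ?thesis
        unfolding sum_PiE_Suc[where m=m]
        by (intro sum.cong refl) (simp only: S C P)
    qed
    finally show ?thesis .
  qed
qed



locale yb_ctx =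
  fixes cm :: "'x::{finite,ab_group_add} \<Rightarrow> 'x \<Rightarrow> 'x"
    and \<sigma> \<tau> :: "'x \<Rightarrow> 'x \<Rightarrow> 'x"
    and h w wi :: "nat \<Rightarrow> 'x \<Rightarrow> 'b::ring_1"
    and n :: nat
  assumes bij: "\<forall>a. bij (\<sigma> a)"
    and brace: "is_brace cm"
    and sig: "\<forall>a b. \<sigma> a b = - a + cm a b"
    and tm: "tensor_model n \<sigma> \<tau> h w wi"
    and wcm: "\<forall>i<n. \<forall>a b. w i a * w i b = w i (cm a b)"
begin

lemma assoc: "cm (cm a b) c = cm a (cm b c)"
  using brace unfolding is_brace_def by blast

lemma compat: "cm a (b + c) = cm a b - a + cm a c"
  using brace unfolding is_brace_def by blast

lemma cm0: "cm a 0 = a"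
proof -
  have "cm a (0 + 0) = cm a 0 - a + cm a 0" by (rule compat)
  then show ?thesis by (simp add: algebra_simps)
qed

lemma cm_neg: "cm a (- b) = a + a - cm a b"
proof -
  have "cm a (b + - b) = cm a b - a + cm a (- b)" by (rule compat)
  then have "a = cm a b - a + cm a (- b)" by (simp add: cm0)
  then show ?thesis by (simp add: algebra_simps)
qed

lemma sig_comp: "\<sigma> a (\<sigma> b x) = \<sigma> (cm a b) x"
proof -
  have "\<sigma> a (\<sigma> b x) = - a + cm a (- b + cm b x)" using sig by simp
  also have "\<dots> = - a + (cm a (- b) - a + cm a (cm b x))" by (simp only: compat)
  also have "\<dots> = - cm a b + cm (cm a b) x" by (simp add: cm_neg assoc algebra_simps)
  also have "\<dots> = \<sigma> (cm a b) x" using sig by simp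
  finally show ?thesis .
qed

lemma sig_inj: "\<sigma> a x = \<sigma> a y \<Longrightarrow> x = y"
  using bij unfolding bij_def inj_def by blast

lemma circ_1: "circ_chain cm a (Suc 0) = a 0"
  by (simp add: circ_chain_def)

lemma circ_Suc: "1 \<le> i \<Longrightarrow> circ_chain cm a (Suc i) = cm (circ_chain cm a i) (a i)"
  by (simp add: circ_chain_def)

lemma sc_0: "sigma_chain \<sigma> a 0 = a 0"
  by (simp add: sigma_chain_def)

lemma foldr_sig: "1 \<le> k \<Longrightarrow> foldr (\<lambda>i x. \<sigma> (a i) x) [0..<k] x = \<sigma> (circ_chain cm a k) x"
proof (induction k arbitrary: x)
  case 0 then show ?case by simp
next
  case (Suc k)
  show ?case
  proof (cases "k = 0")
    case True then show ?thesis by (simp add: circ_1)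
  next
    case False
    then have "foldr (\<lambda>i x. \<sigma> (a i) x) [0..<Suc k] x = \<sigma> (circ_chain cm a k) (\<sigma> (a k) x)"
      using Suc.IH by simp
    also have "\<dots> = \<sigma> (circ_chain cm a (Suc k)) x"
      using False by (simp add: sig_comp circ_Suc)
    finally show ?thesis .
  qed
qed

lemma sc_circ: "1 \<le> i \<Longrightarrow> sigma_chain \<sigma> a i = \<sigma> (circ_chain cm a i) (a i)"
  unfolding sigma_chain_def by (rule foldr_sig)

lemma circ_cong: "1 \<le> i \<Longrightarrow> (\<forall>j<i. a j = b j) \<Longrightarrow> circ_chain cm a i = circ_chain cm b i"
proof (induction i)
  case 0 then show ?case by simp
next
  case (Suc i)
  then show ?case
    by (cases "i = 0") (auto simp: circ_1 circ_Suc)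
qed

lemma circ_sum: "1 \<le> m \<Longrightarrow> circ_chain cm a m = (\<Sum>i<m. sigma_chain \<sigma> a i)"
proof (induction m)
  case 0 then show ?case by simp
next
  case (Suc m)
  show ?case
  proof (cases "m = 0")
    case True then show ?thesis by (simp add: circ_1 sc_0)
  next
    case False
    then have "circ_chain cm a (Suc m) = circ_chain cm a m + \<sigma> (circ_chain cm a m) (a m)"
      using sig by (simp add: circ_Suc)
    then show ?thesis using Suc False by (simp add: sc_circ)
  qed
qed

lemma YB: "i < n \<Longrightarrow> YB_relations \<sigma> \<tau> (h i) (w i) (wi i)"
  using tm unfolding tensor_model_def by blast

lemma hh: "i < n \<Longrightarrow> h i a * h i b = (if a = b then h i a else 0)"
  using YB unfolding YB_relations_def by blast

lemma wiw: "i < n \<Longrightarrow> wi i a * w i a = 1"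
  using YB unfolding YB_relations_def by blast

lemma wwi: "i < n \<Longrightarrow> w i a * wi i a = 1"
  using YB unfolding YB_relations_def by blast

lemma wh: "i < n \<Longrightarrow> w i a * h i b = h i (\<sigma> a b) * w i a"
  using YB unfolding YB_relations_def by blast

lemma wih: "i < n \<Longrightarrow> wi i x * h i (\<sigma> x y) = h i y * wi i x"
proof -
  assume i: "i < n"
  have "wi i x * h i (\<sigma> x y) = wi i x * (h i (\<sigma> x y) * w i x) * wi i x"
    by (simp add: mult.assoc wwi[OF i])
  also have "\<dots> = (wi i x * w i x) * h i y * wi i x"
    by (simp add: mult.assoc wh[OF i])
  finally show ?thesis by (simp add: wiw[OF i])
qed

lemma wi_cm: "i < n \<Longrightarrow> wi i (cm x y) = wi i y * wi i x"
proof -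
  assume i: "i < n"
  have "w i (cm x y) * (wi i y * wi i x) = 1"
  proof -
    have "w i (cm x y) * (wi i y * wi i x) = w i x * (w i y * wi i y) * wi i x"
    proof -
      have "w i (cm x y) = w i x * w i y" using wcm i by simp
      then show ?thesis by (simp add: mult.assoc)
    qed
    then show ?thesis by (simp add: wwi[OF i])
  qed
  then have "wi i (cm x y) * (w i (cm x y) * (wi i y * wi i x)) = wi i (cm x y)" by simp
  then show ?thesis by (simp add: mult.assoc[symmetric] wiw[OF i])
qed

lemma W_eq: "1 \<le> m \<Longrightarrow> m < n \<Longrightarrow>
   prod_list (map (\<lambda>j. wi m (a j)) (rev [0..<m])) = wi m (circ_chain cm a m)"
proof -
  assume m: "1 \<le> m" "m < n"
  have "\<And>k. 1 \<le> k \<Longrightarrow> k \<le> m \<Longrightarrow> prod_list (map (\<lambda>j. wi m (a j)) (rev [0..<k])) = wi m (circ_chain cm a k)"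
  proof -
    fix k :: nat
    show "1 \<le> k \<Longrightarrow> k \<le> m \<Longrightarrow> prod_list (map (\<lambda>j. wi m (a j)) (rev [0..<k])) = wi m (circ_chain cm a k)"
    proof (induction k)
      case 0 then show ?case by simp
    next
      case (Suc k)
      show ?case
      proof (cases "k = 0")
        case True then show ?thesis by (simp add: circ_1)
      next
        case False
        then show ?thesis using Suc m by (simp add: circ_Suc wi_cm)
      qed
    qed
  qed
  then show ?thesis using m by simp
qed

end



context yb_ctx
begin

definition slot :: "nat \<Rightarrow> 'b \<Rightarrow> bool" where
  "slot i x \<longleftrightarrow> (\<forall>z. (\<forall>g\<in>range (h i) \<union> range (w i) \<union> range (wi i). z * g = g * z) \<longrightarrow> z * x = x * z)"

lemma slot_h: "slot i (h i a)" unfolding slot_def by auto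
lemma slot_wi: "slot i (wi i a)" unfolding slot_def by auto
lemma slot_mult: "slot i x \<Longrightarrow> slot i y \<Longrightarrow> slot i (x * y)"
  unfolding slot_def
proof (intro allI impI)
  fix z assume x: "\<forall>z. (\<forall>g\<in>range (h i) \<union> range (w i) \<union> range (wi i). z * g = g * z) \<longrightarrow> z * x = x * z"
    and y: "\<forall>z. (\<forall>g\<in>range (h i) \<union> range (w i) \<union> range (wi i). z * g = g * z) \<longrightarrow> z * y = y * z"
    and z: "\<forall>g\<in>range (h i) \<union> range (w i) \<union> range (wi i). z * g = g * z"
  have "z * x = x * z" "z * y = y * z" using x y z by blast+
  then show "z * (x * y) = x * y * z" by (simp add: mult.assoc[symmetric]) (simp add: mult.assoc)
qed

lemma slot_comm:
  assumes "i < n" "j < n" "i \<noteq> j" "slot i x" "slot j y"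
  shows "x * y = y * x"
proof -
  have gg: "\<forall>g\<in>range (h i) \<union> range (w i) \<union> range (wi i).
         \<forall>g'\<in>range (h j) \<union> range (w j) \<union> range (wi j). g * g' = g' * g"
    using tm assms(1-3) unfolding tensor_model_def by blast
  have "\<forall>g\<in>range (h i) \<union> range (w i) \<union> range (wi i). y * g = g * y"
  proof
    fix g assume g: "g \<in> range (h i) \<union> range (w i) \<union> range (wi i)"
    then have "\<forall>g'\<in>range (h j) \<union> range (w j) \<union> range (wi j). g * g' = g' * g" using gg by blast
    then have "g * y = y * g" using assms(5) unfolding slot_def by blast
    then show "y * g = g * y" by simp
  qed
  then have "y * x = x * y" using assms(4) unfolding slot_def by blast
  then show ?thesis by simp
qed

lemma comm_prod:
  "k < n \<Longrightarrow> slot k x \<Longrightarrow> j \<le> k \<Longrightarrow> (\<forall>i<j. slot i (f i)) \<Longrightarrow>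
   x * prod_list (map f [0..<j]) = prod_list (map f [0..<j]) * x"
proof (induction j)
  case 0 then show ?case by simp
next
  case (Suc j)
  have IH: "x * prod_list (map f [0..<j]) = prod_list (map f [0..<j]) * x"
    using Suc by simp
  have c: "x * f j = f j * x"
    using Suc.prems slot_comm[of k j x "f j"] by simp
  have "x * prod_list (map f [0..<Suc j]) = (x * prod_list (map f [0..<j])) * f j"
    by (simp add: mult.assoc)
  also have "\<dots> = prod_list (map f [0..<j]) * (x * f j)" by (simp add: IH mult.assoc)
  also have "\<dots> = prod_list (map f [0..<Suc j]) * x" by (simp add: c mult.assoc)
  finally show ?case .
qed

lemma interchange:
  "j \<le> n \<Longrightarrow> (\<forall>i<j. slot i (f i) \<and> slot i (g i)) \<Longrightarrow>
   prod_list (map f [0..<j]) * prod_list (map g [0..<j]) = prod_list (map (\<lambda>i. f i * g i) [0..<j])"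
proof (induction j)
  case 0 then show ?case by simp
next
  case (Suc j)
  have IH: "prod_list (map f [0..<j]) * prod_list (map g [0..<j]) = prod_list (map (\<lambda>i. f i * g i) [0..<j])"
    using Suc by simp
  have c: "f j * prod_list (map g [0..<j]) = prod_list (map g [0..<j]) * f j"
    using Suc.prems by (intro comm_prod[of j]) auto
  have "prod_list (map f [0..<Suc j]) * prod_list (map g [0..<Suc j])
      = prod_list (map f [0..<j]) * (f j * prod_list (map g [0..<j])) * g j"
    by (simp add: mult.assoc)
  also have "\<dots> = (prod_list (map f [0..<j]) * prod_list (map g [0..<j])) * (f j * g j)"
    by (simp add: c mult.assoc)
  also have "\<dots> = prod_list (map (\<lambda>i. f i * g i) [0..<Suc j])" by (simp add: IH)
  finally show ?case .
qed

lemma F_col_eq: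
  assumes "1 \<le> m" "m < n"
  shows "F_col \<sigma> h wi (Suc m) = (\<Sum>a\<in>Pi\<^sub>E {..<m} (\<lambda>_. UNIV).
     prod_list (map (\<lambda>i. h i (sigma_chain \<sigma> a i)) [0..<m]) * wi m (circ_chain cm a m))"
proof -
  have key: "\<And>a. prod_list (map (\<lambda>i. if i < m then h i (sigma_chain \<sigma> a i)
                             else prod_list (map (\<lambda>j. wi m (a j)) (rev [0..<m]))) [0..<Suc m])
     = prod_list (map (\<lambda>i. h i (sigma_chain \<sigma> a i)) [0..<m]) * wi m (circ_chain cm a m)"
  proof -
    fix a
    let ?F = "\<lambda>i. if i < m then h i (sigma_chain \<sigma> a i)
                             else prod_list (map (\<lambda>j. wi m (a j)) (rev [0..<m]))"
    have e1: "prod_list (map ?F [0..<Suc m]) = prod_list (map ?F [0..<m]) * ?F m" by simp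
    have e2: "prod_list (map ?F [0..<m]) = prod_list (map (\<lambda>i. h i (sigma_chain \<sigma> a i)) [0..<m])"
      by (rule arg_cong[where f=prod_list], rule map_cong) auto
    have e3: "?F m = wi m (circ_chain cm a m)" using W_eq[OF assms] by simp
    show "?thesis a" by (simp only: e1 e2 e3)
  qed
  show ?thesis unfolding F_col_def diff_Suc_1 by (rule sum.cong[OF refl], rule key)
qed

lemma part1:
  assumes "1 \<le> m" "m < n"
  shows "F_col \<sigma> h wi (Suc m) = (\<Sum>x\<in>UNIV. Delta_h h m x * wi m x)"
proof -
  let ?A = "Pi\<^sub>E {..<m} (\<lambda>_. UNIV :: 'x set)"
  let ?g = "\<lambda>c. prod_list (map (\<lambda>i. h i (c i)) [0..<m]) * wi m (\<Sum>i<m. c i)"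
  define \<phi> where "\<phi> a = restrict (sigma_chain \<sigma> a) {..<m}" for a
  have inj: "inj_on \<phi> ?A"
  proof
    fix a b assume a: "a \<in> ?A" and b: "b \<in> ?A" and e: "\<phi> a = \<phi> b"
    have sc: "\<forall>i<m. sigma_chain \<sigma> a i = sigma_chain \<sigma> b i"
      using e unfolding \<phi>_def by (metis lessThan_iff restrict_apply')
    have "\<forall>i<m. a i = b i"
    proof (intro allI impI)
      fix i show "i < m \<Longrightarrow> a i = b i"
      proof (induction i rule: less_induct)
        case (less i)
        show ?case
        proof (cases "i = 0")
          case True then show ?thesis using sc less by (metis sc_0)
        next
          case False
          then have "circ_chain cm a i = circ_chain cm b i"
            using less by (intro circ_cong) auto
          moreover have "\<sigma> (circ_chain cm a i) (a i) = \<sigma> (circ_chain cm b i) (b i)"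
            using sc less False sc_circ[of i a] sc_circ[of i b] by simp
          ultimately show ?thesis using sig_inj by metis
        qed
      qed
    qed
    then show "a = b" using a b by (intro PiE_ext) auto
  qed
  have sub: "\<phi> ` ?A \<subseteq> ?A" unfolding \<phi>_def by (intro image_subsetI) simp
  have fin: "finite ?A" by (rule finite_PiE) auto
  have img: "\<phi> ` ?A = ?A" by (rule endo_inj_surj[OF fin sub inj])
  have pm: "\<And>x. prod_list (map (\<lambda>i. h i (if i < m then sigma_chain \<sigma> x i else undefined)) [0..<m]) = prod_list (map (\<lambda>i. h i (sigma_chain \<sigma> x i)) [0..<m])"
    by (rule arg_cong[where f=prod_list], rule map_cong) auto
  have "F_col \<sigma> h wi (Suc m) = (\<Sum>a\<in>?A. ?g (\<phi> a))"
    unfolding F_col_eq[OF assms] \<phi>_def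
    by (intro sum.cong refl) (simp add: circ_sum[OF assms(1)] pm)
  also have "\<dots> = sum ?g (\<phi> ` ?A)"
    by (simp add: sum.reindex[OF inj])
  also have "\<dots> = sum ?g ?A" by (simp add: img)
  also have "\<dots> = (\<Sum>c\<in>?A. \<Sum>x\<in>UNIV. if (\<Sum>i<m. c i) = x then prod_list (map (\<lambda>i. h i (c i)) [0..<m]) * wi m x else 0)"
    by (simp add: sum.delta)
  also have "\<dots> = (\<Sum>x\<in>UNIV. \<Sum>c\<in>?A. if (\<Sum>i<m. c i) = x then prod_list (map (\<lambda>i. h i (c i)) [0..<m]) * wi m x else 0)"
    by (rule sum.swap)
  also have "\<dots> = (\<Sum>x\<in>UNIV. Delta_h h m x * wi m x)"
    by (simp add: Delta_h_eq[OF assms(1)] sum_distrib_right) (rule sum.cong, simp, rule sum.cong, auto)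
  finally show ?thesis .
qed

end



context yb_ctx
begin

definition Zf :: "nat \<Rightarrow> (nat \<Rightarrow> 'x) \<Rightarrow> 'b" where
  "Zf i b = (if i = 0 then h 0 (b 0) else h i (b i) * wi i (circ_chain cm b i))"

lemma slot_Zf: "slot i (Zf i b)"
  unfolding Zf_def by (auto intro: slot_mult slot_h slot_wi)

lemma formula_eq:
  assumes "1 \<le> k"
  shows "F_tot_formula cm h wi (Suc k) = (\<Sum>b\<in>Pi\<^sub>E {..<k} (\<lambda>_. UNIV).
           prod_list (map (\<lambda>i. Zf i b) [0..<k]) * wi k (circ_chain cm b k))"
proof -
  have key: "\<And>b. prod_list (map (\<lambda>i. if i = 0 then h 0 (b 0)
                             else if i < k then h i (b i) * wi i (circ_chain cm b i)
                             else wi i (circ_chain cm b k)) [0..<Suc k])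
     = prod_list (map (\<lambda>i. Zf i b) [0..<k]) * wi k (circ_chain cm b k)"
  proof -
    fix b
    let ?F = "\<lambda>i. if i = 0 then h 0 (b 0)
                             else if i < k then h i (b i) * wi i (circ_chain cm b i)
                             else wi i (circ_chain cm b k)"
    have e1: "prod_list (map ?F [0..<Suc k]) = prod_list (map ?F [0..<k]) * ?F k" by simp
    have e2: "prod_list (map ?F [0..<k]) = prod_list (map (\<lambda>i. Zf i b) [0..<k])"
      by (rule arg_cong[where f=prod_list], rule map_cong) (auto simp: Zf_def)
    have e3: "?F k = wi k (circ_chain cm b k)" using assms by simp
    show "?thesis b" by (simp only: e1 e2 e3)
  qed
  show ?thesis unfolding F_tot_formula_def diff_Suc_1 by (rule sum.cong[OF refl], rule key)
qed

lemma local_step: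
  assumes "j < n" "\<forall>i<j. a i = b i"
  shows "Zf j a * h j (sigma_chain \<sigma> b j) = (if a j = b j then Zf j b else 0)"
proof (cases "j = 0")
  case True then show ?thesis using assms by (simp add: Zf_def sc_0 hh)
next
  case False
  then have C: "circ_chain cm a j = circ_chain cm b j" using assms by (intro circ_cong) auto
  let ?C = "circ_chain cm b j"
  have "Zf j a * h j (sigma_chain \<sigma> b j) = h j (a j) * (wi j ?C * h j (\<sigma> ?C (b j)))"
    using False C by (simp add: Zf_def sc_circ mult.assoc)
  also have "\<dots> = (h j (a j) * h j (b j)) * wi j ?C"
    by (simp add: wih[OF assms(1)] mult.assoc)
  also have "\<dots> = (if a j = b j then Zf j b else 0)"
    using False by (simp add: hh[OF assms(1)] Zf_def)
  finally show ?thesis .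
qed

lemma last_step:
  assumes "1 \<le> k" "k < n" "\<forall>i<k. a i = b i"
  shows "wi k (circ_chain cm a k) * h k (sigma_chain \<sigma> b k) = Zf k b"
proof -
  have C: "circ_chain cm a k = circ_chain cm b k" using assms by (intro circ_cong) auto
  then show ?thesis using assms by (simp add: sc_circ wih Zf_def)
qed

lemma L:
  "j \<le> n \<Longrightarrow> prod_list (map (\<lambda>i. Zf i a * h i (sigma_chain \<sigma> b i)) [0..<j]) =
     (if (\<forall>i<j. a i = b i) then prod_list (map (\<lambda>i. Zf i b) [0..<j]) else 0)"
proof (induction j)
  case 0 then show ?case by simp
next
  case (Suc j)
  then have IH: "prod_list (map (\<lambda>i. Zf i a * h i (sigma_chain \<sigma> b i)) [0..<j]) =
     (if (\<forall>i<j. a i = b i) then prod_list (map (\<lambda>i. Zf i b) [0..<j]) else 0)" by simp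
  show ?case
  proof (cases "\<forall>i<j. a i = b i")
    case True
    then have "(\<forall>i<Suc j. a i = b i) = (a j = b j)" by (auto simp: less_Suc_eq)
    then show ?thesis using IH True local_step[of j a b] Suc.prems by simp
  next
    case False
    then show ?thesis using IH by auto
  qed
qed

lemma step:
  assumes k: "1 \<le> k" "Suc k < n"
  shows "F_tot_formula cm h wi (Suc k) * F_col \<sigma> h wi (Suc (Suc k)) = F_tot_formula cm h wi (Suc (Suc k))"
proof -
  let ?A = "Pi\<^sub>E {..<k} (\<lambda>_. UNIV :: 'x set)"
  let ?B = "Pi\<^sub>E {..<Suc k} (\<lambda>_. UNIV :: 'x set)"
  let ?P = "\<lambda>a. prod_list (map (\<lambda>i. Zf i a) [0..<k])"
  let ?WA = "\<lambda>a. wi k (circ_chain cm a k)"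
  let ?Q = "\<lambda>b. prod_list (map (\<lambda>i. h i (sigma_chain \<sigma> b i)) [0..<Suc k])"
  let ?H = "\<lambda>b. prod_list (map (\<lambda>i. h i (sigma_chain \<sigma> b i)) [0..<k])"
  let ?WB = "\<lambda>b. wi (Suc k) (circ_chain cm b (Suc k))"
  let ?T = "\<lambda>b. prod_list (map (\<lambda>i. Zf i b) [0..<Suc k]) * ?WB b"
  have teq: "(?P a * ?WA a) * (?Q b * ?WB b) = (if (\<forall>i<k. a i = b i) then ?T b else 0)" for a b
  proof -
    have c: "?WA a * ?H b = ?H b * ?WA a"
      using k by (intro comm_prod[of k]) (auto simp: slot_wi slot_h)
    have "(?P a * ?WA a) * (?Q b * ?WB b) = ?P a * (?WA a * ?H b) * h k (sigma_chain \<sigma> b k) * ?WB b"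
      by (simp add: mult.assoc)
    also have "\<dots> = (?P a * ?H b) * (?WA a * h k (sigma_chain \<sigma> b k)) * ?WB b"
      by (simp only: c mult.assoc)
    also have "?P a * ?H b = prod_list (map (\<lambda>i. Zf i a * h i (sigma_chain \<sigma> b i)) [0..<k])"
      using k by (intro interchange) (auto simp: slot_Zf slot_h)
    also have "\<dots> = (if (\<forall>i<k. a i = b i) then ?P b else 0)"
      using k by (intro L) auto
    finally have F: "(?P a * ?WA a) * (?Q b * ?WB b) = (if (\<forall>i<k. a i = b i) then ?P b else 0) * (?WA a * h k (sigma_chain \<sigma> b k)) * ?WB b" .
    show ?thesis
    proof (cases "\<forall>i<k. a i = b i")
      case True
      then have "?WA a * h k (sigma_chain \<sigma> b k) = Zf k b" using last_step[of k a b] k by auto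
      then show ?thesis using F True by (simp add: mult.assoc)
    next
      case False
      then have e: "(\<forall>i<k. a i = b i) = False" by blast
      show ?thesis unfolding F e if_False by simp
    qed
  qed
  have "F_tot_formula cm h wi (Suc k) * F_col \<sigma> h wi (Suc (Suc k))
      = (\<Sum>a\<in>?A. ?P a * ?WA a) * (\<Sum>b\<in>?B. ?Q b * ?WB b)"
    using k by (simp add: formula_eq F_col_eq)
  also have "\<dots> = (\<Sum>a\<in>?A. \<Sum>b\<in>?B. (?P a * ?WA a) * (?Q b * ?WB b))"
    by (simp add: sum_distrib_left sum_distrib_right) (rule sum.swap)
  also have "\<dots> = (\<Sum>a\<in>?A. \<Sum>b\<in>?B. if (\<forall>i<k. a i = b i) then ?T b else 0)"
    by (simp only: teq)
  also have "\<dots> = (\<Sum>b\<in>?B. \<Sum>a\<in>?A. if (\<forall>i<k. a i = b i) then ?T b else 0)"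
    by (rule sum.swap)
  also have "\<dots> = (\<Sum>b\<in>?B. \<Sum>a\<in>?A. if a = restrict b {..<k} then ?T b else 0)"
  proof (intro sum.cong refl)
    fix b a assume a: "a \<in> ?A"
    have "(\<forall>i<k. a i = b i) = (a = restrict b {..<k})"
    proof
      assume "\<forall>i<k. a i = b i"
      then show "a = restrict b {..<k}" using a by (intro PiE_ext) auto
    qed auto
    then show "(if (\<forall>i<k. a i = b i) then ?T b else 0) = (if a = restrict b {..<k} then ?T b else 0)"
      by simp
  qed
  also have "\<dots> = (\<Sum>b\<in>?B. ?T b)"
  proof (intro sum.cong refl)
    fix b
    have fin: "finite ?A" by (rule finite_PiE) auto
    have "restrict b {..<k} \<in> ?A" by simp
    then show "(\<Sum>a\<in>?A. if a = restrict b {..<k} then ?T b else 0) = ?T b"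
      using sum.delta[OF fin, of "restrict b {..<k}" "\<lambda>_. ?T b"] by simp
  qed
  also have "\<dots> = F_tot_formula cm h wi (Suc (Suc k))"
    using k by (simp add: formula_eq)
  finally show ?thesis .
qed

lemma part2:
  "2 \<le> k \<Longrightarrow> k \<le> n \<Longrightarrow> F_tot \<sigma> h wi k = F_tot_formula cm h wi k"
proof (induction k)
  case 0 then show ?case by simp
next
  case (Suc k)
  show ?case
  proof (cases "k = 1")
    case True
    have "F_col \<sigma> h wi 2 = F_tot_formula cm h wi 2"
      using F_col_eq[of 1] formula_eq[of 1] Suc.prems by (simp add: Zf_def sc_0 numeral_2_eq_2)
    then show ?thesis using True by (simp add: numeral_2_eq_2)
  next
    case False
    then have k2: "2 \<le> k" using Suc.prems by simp
    obtain k' where k': "k = Suc k'" "1 \<le> k'" using k2 by (cases k) auto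
    have "F_tot \<sigma> h wi (Suc k) = F_tot \<sigma> h wi k * F_col \<sigma> h wi (Suc k)"
      using k2 by simp
    also have "\<dots> = F_tot_formula cm h wi k * F_col \<sigma> h wi (Suc k)"
      using Suc k2 by simp
    also have "\<dots> = F_tot_formula cm h wi (Suc k)"
      using step[of k'] k' Suc.prems by simp
    finally show ?thesis .
  qed
qed

end

theorem lemma2p18:
  fixes \<iota> :: "'k::field \<Rightarrow> 'b::ring_1"
    and cm :: "'x::{finite,ab_group_add} \<Rightarrow> 'x \<Rightarrow> 'x"
    and \<sigma> \<tau> :: "'x \<Rightarrow> 'x \<Rightarrow> 'x"
    and h w wi :: "nat \<Rightarrow> 'x \<Rightarrow> 'b"
    and n :: nat
  assumes "is_k_algebra \<iota>"
    and "\<forall>a. bij (\<sigma> a)"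
    and "is_brace cm"
    and "\<forall>a b. \<sigma> a b = - a + cm a b"
    and "\<forall>a b. \<sigma> (\<sigma> a b) (\<tau> b a) = a"
    and "tensor_model n \<sigma> \<tau> h w wi"
    and "\<forall>i<n. \<forall>a b. w i a * w i b = w i (cm a b)"
    and "n \<ge> 2"
  shows "F_col \<sigma> h wi n = (\<Sum>a\<in>UNIV. Delta_h h (n-1) a * wi (n-1) a)
         \<and> F_tot \<sigma> h wi n = F_tot_formula cm h wi n"
proof -
  interpret yb_ctx cm \<sigma> \<tau> h w wi n
    using assms by unfold_locales auto
  obtain m where m: "n = Suc m" "1 \<le> m" using assms(8) by (cases n) auto
  have "F_col \<sigma> h wi n = (\<Sum>a\<in>UNIV. Delta_h h (n-1) a * wi (n-1) a)"
    using part1[of m] m by simp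
  moreover have "F_tot \<sigma> h wi n = F_tot_formula cm h wi n"
    using part2[of n] assms(8) by simp
  ultimately show ?thesis by simp
qed


end
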